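(* Let $P\ll Q$ be probability measures, $E$ measurable, $q:=Q(E)$, and $V:=\mathrm{VC}(P\Vert Q)$. Then $$P(E)\le\frac{V(1-q)+2q+\sqrt{V\big(V+8q(1-q)\big)}}{V+2}.$$
   Context: The Vincze–Le Cam divergence is the $f$-divergence $\mathrm{VC}(P\Vert Q):=D_f(P\Vert Q)=\int f(\mathrm dP/\mathrm dQ)\,\mathrm dQ$ with $f(t)=\frac{2-2t}{t+1}$ (equivalently $\int\frac{(\mathrm dP/\mathrm dQ-1)^2}{\mathrm dP/\mathrm dQ+1}\,\mathrm dQ$). *)

theory Defs
  imports "HOL-Probability.Probability"
begin

definition f_divergence :: "(real \<Rightarrow> real) \<Rightarrow> 'a measure \<Rightarrow> 'a measure \<Rightarrow> real" where
  "f_divergence f P Q = (\<integral>x. f (enn2real (RN_deriv Q P x)) \<partial>Q)"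

definition VC_divergence :: "'a measure \<Rightarrow> 'a measure \<Rightarrow> real" where
  "VC_divergence P Q = f_divergence (\<lambda>t. (2 - 2 * t) / (t + 1)) P Q"

end

theory Submission
  imports Defs
begin

lemma tangent_ineq:
  fixes t c :: real assumes "t \<ge> 0" "c \<ge> 0"
  shows "4 * ((2*c+1) - t) / (c+1)^2 \<le> (2 - 2*t)/(t+1) + 2"
proof -
  have e: "(c+1)^2 - ((2*c+1) - t) * (t+1) = (c - t)^2" by algebra
  have "((2*c+1) - t) * (t+1) \<le> (c+1)^2"
    using e by (smt (verit) zero_le_power2)
  hence "((2*c+1) - t) / (c+1)^2 \<le> 1/(t+1)"
    using assms by (simp add: field_simps)
  moreover have "(2 - 2*t)/(t+1) + 2 = 4/(t+1)" using assms by (simp add: field_simps)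
  moreover have "4 * ((2*c+1) - t) / (c+1)^2 = 4 * (((2*c+1) - t) / (c+1)^2)" by simp
  moreover have "4/(t+1) = 4 * (1/(t+1))" by simp
  ultimately show ?thesis by linarith
qed

lemma final_alg:
  fixes V p q :: real
  assumes "V \<ge> 0" "0 \<le> p" "p \<le> 1" "0 \<le> q" "q \<le> 1"
    and "V * (p+q) * (2-p-q) \<ge> 2*(p-q)^2"
  shows "p \<le> (V * (1 - q) + 2 * q + sqrt (V * (V + 8 * q * (1 - q)))) / (V + 2)"
proof -
  define s where "s = sqrt (V * (V + 8 * q * (1 - q)))"
  have s0: "s \<ge> 0" and s2: "s^2 = V * (V + 8 * q * (1 - q))"
    using assms by (auto simp: s_def mult_nonneg_nonneg)
  have "(V+2)*p - (V * (1 - q) + 2 * q) \<le> s"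
  proof (cases "(V+2)*p - (V * (1 - q) + 2 * q) \<le> 0")
    case True thus ?thesis using s0 by linarith
  next
    case False
    have "((V+2)*p - (V * (1 - q) + 2 * q))^2 \<le> s^2"
    proof -
      have "s^2 - ((V+2)*p - (V * (1 - q) + 2 * q))^2 = (V+2)*(V * (p+q) * (2-p-q) - 2*(p-q)^2)"
        unfolding s2 by algebra
      moreover have "(V+2)*(V * (p+q) * (2-p-q) - 2*(p-q)^2) \<ge> 0" using assms by simp
      ultimately show ?thesis by linarith
    qed
    thus ?thesis using s0 by (rule power2_le_imp_le)
  qed
  hence "p * (V+2) \<le> V * (1 - q) + 2 * q + s" by (simp add: algebra_simps)
  thus ?thesis using assms unfolding s_def[symmetric] by (subst pos_le_divide_eq) auto
qed



lemma binary_step: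
  fixes V p q :: real
  assumes "0 < q" "q < 1" "0 \<le> p" "p \<le> 1"
    and "V + 2 \<ge> 4*q^2/(p+q) + 4*(1-q)^2/(2-p-q)"
  shows "V * (p+q) * (2-p-q) \<ge> 2*(p-q)^2"
proof -
  have a: "p+q > 0" "2-p-q > 0" using assms by auto
  have "(V+2)*((p+q)*(2-p-q)) \<ge> (4*q^2/(p+q) + 4*(1-q)^2/(2-p-q))*((p+q)*(2-p-q))"
    using assms a by (intro mult_right_mono) auto
  also have "(4*q^2/(p+q) + 4*(1-q)^2/(2-p-q))*((p+q)*(2-p-q)) = 4*q^2*(2-p-q) + 4*(1-q)^2*(p+q)"
  proof -
    have 1: "4*q^2/(p+q)*((p+q)*(2-p-q)) = 4*q^2*(2-p-q)" using a by simp
    have 2: "4*(1-q)^2/(2-p-q)*((p+q)*(2-p-q)) = 4*(1-q)^2*(p+q)" using a by simp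
    show ?thesis by (subst distrib_right) (simp only: 1 2)
  qed
  finally have "(V+2)*((p+q)*(2-p-q)) \<ge> 4*q^2*(2-p-q) + 4*(1-q)^2*(p+q)" .
  moreover have "4*q^2*(2-p-q) + 4*(1-q)^2*(p+q) - 2*((p+q)*(2-p-q)) = 2*(p-q)^2" by algebra
  ultimately show ?thesis by (simp add: algebra_simps)
qed

lemma aux_div: fixes a b :: real assumes "a > 0" "b \<noteq> 0" shows "4*a/(a/b)^2 = 4*b^2/a"
proof -
  have "4*a/(a/b)^2 = 4*a*b^2/(a*a)" by (simp add: power_divide power2_eq_square)
  also have "\<dots> = 4*b^2/a" using assms by simp
  finally show ?thesis .
qed

theorem mainTheorem19:
  fixes P Q :: "'a measure" and E :: "'a set"
  assumes "prob_space P" and "prob_space Q"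
    and "sets P = sets Q"
    and "absolutely_continuous Q P"
    and "E \<in> sets Q"
  shows "measure P E \<le>
    (VC_divergence P Q * (1 - measure Q E) + 2 * measure Q E
      + sqrt (VC_divergence P Q * (VC_divergence P Q + 8 * measure Q E * (1 - measure Q E))))
    / (VC_divergence P Q + 2)"
proof -
  interpret Q: prob_space Q by fact
  interpret P: prob_space P by fact
  have sfP: "sigma_finite_measure P" by (rule P.sigma_finite_measure_axioms)
  note ac = assms(4) and se = assms(3)
  have spe: "space P = space Q" using se by (rule sets_eq_imp_space_eq)
  define g where "g x = enn2real (RN_deriv Q P x)" for x
  have g0: "g x \<ge> 0" for x by (simp add: g_def)
  have gm: "g \<in> borel_measurable Q" unfolding g_def by measurable
  have indA: "integrable Q (\<lambda>x. g x * indicator A x) \<and> (\<integral>x. g x * indicator A x \<partial>Q) = measure P A"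
    if A: "A \<in> sets Q" for A
  proof -
    have m: "indicator A \<in> borel_measurable Q" using A by simp
    have "integrable P (indicator A :: 'a \<Rightarrow> real)"
      using A se P.emeasure_finite[of A] by (intro integrable_real_indicator) (auto simp: less_top[symmetric])
    hence 1: "integrable Q (\<lambda>x. g x * indicator A x)"
      using Q.RN_deriv_integrable[OF sfP ac se m] unfolding g_def by simp
    have "measure P A = integral\<^sup>L P (indicator A)" using A se by simp
    also have "\<dots> = (\<integral>x. g x * indicator A x \<partial>Q)"
      using Q.RN_deriv_integral[OF sfP ac se m] unfolding g_def by simp
    finally show ?thesis using 1 by simp
  qed
  define Ec where "Ec = space Q - E"
  have Ec: "Ec \<in> sets Q" unfolding Ec_def using assms(5) by auto
  define p where "p = measure P E"
  define q where "q = measure Q E"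
  define V where "V = VC_divergence P Q"
  have qc: "measure Q Ec = 1 - q" unfolding Ec_def q_def using assms(5) Q.prob_compl by simp
  have pc: "measure P Ec = 1 - p" unfolding Ec_def p_def using assms(5) P.prob_compl se spe by simp
  define F where "F t = (2 - 2*t)/(t+1)" for t :: real
  have VF: "V = (\<integral>x. F (g x) \<partial>Q)" unfolding V_def VC_divergence_def f_divergence_def F_def g_def by simp
  have Fb: "norm (F t) \<le> 2" if "t \<ge> 0" for t
    using that by (auto simp: F_def field_simps abs_le_iff)
  have Fint: "integrable Q (\<lambda>x. F (g x))"
  proof (rule Q.integrable_const_bound[where B=2])
    show "AE x in Q. norm (F (g x)) \<le> 2" using Fb g0 by auto
    show "(\<lambda>x. F (g x)) \<in> borel_measurable Q" unfolding F_def using gm by measurable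
  qed
  have gen: "V + 2 \<ge> 4*((2*c1+1)*q - p)/(c1+1)^2 + 4*((2*c2+1)*(1-q) - (1-p))/(c2+1)^2"
    if c: "c1 \<ge> 0" "c2 \<ge> 0" for c1 c2 :: real
  proof -
    define k1 where "k1 = 4/(c1+1)^2"
    define k2 where "k2 = 4/(c2+1)^2"
    define h where "h x = k1*(2*c1+1)*indicator E x - k1*(g x*indicator E x)
       + (k2*(2*c2+1)*indicator Ec x - k2*(g x*indicator Ec x)) - 2" for x
    have iE: "integrable Q (\<lambda>x. g x * indicator E x)" "(\<integral>x. g x * indicator E x \<partial>Q) = p"
      using indA[OF assms(5)] p_def by auto
    have iEc: "integrable Q (\<lambda>x. g x * indicator Ec x)" "(\<integral>x. g x * indicator Ec x \<partial>Q) = 1 - p"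
      using indA[OF Ec] pc by auto
    have ie: "integrable Q (indicator E :: 'a \<Rightarrow> real)" "integrable Q (indicator Ec :: 'a \<Rightarrow> real)"
      using assms(5) Ec by (auto intro!: integrable_real_indicator simp: less_top[symmetric])
    have hint: "integrable Q h" unfolding h_def using iE iEc ie by auto
    have hval: "(\<integral>x. h x \<partial>Q) = k1*(2*c1+1)*q - k1*p + (k2*(2*c2+1)*(1-q) - k2*(1-p)) - 2"
      unfolding h_def using iE iEc ie assms(5) Ec qc q_def Q.prob_space by simp
    have "(\<integral>x. h x \<partial>Q) \<le> (\<integral>x. F (g x) \<partial>Q)"
    proof (rule integral_mono[OF hint Fint])
      fix x assume x: "x \<in> space Q"
      show "h x \<le> F (g x)"
      proof (cases "x \<in> E")
        case True
        thus ?thesis using tangent_ineq[OF g0 c(1), of x] unfolding h_def F_def k1_def Ec_def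
          by (simp add: algebra_simps add_divide_distrib diff_divide_distrib)
      next
        case False
        thus ?thesis using x tangent_ineq[OF g0 c(2), of x] unfolding h_def F_def k2_def Ec_def
          by (simp add: algebra_simps add_divide_distrib diff_divide_distrib)
      qed
    qed
    thus ?thesis using hval VF unfolding k1_def k2_def
      by (simp add: algebra_simps add_divide_distrib diff_divide_distrib)
  qed
  have p01: "0 \<le> p" "p \<le> 1" "0 \<le> q" "q \<le> 1" unfolding p_def q_def by auto
  have V0: "V \<ge> 0" using gen[of 1 1] by (simp add: field_simps)
  have bin: "V * (p+q) * (2-p-q) \<ge> 2*(p-q)^2"
  proof -
    consider "q = 0" | "q = 1" | "0 < q \<and> q < 1" using p01 by linarith
    thus ?thesis
    proof cases
      case 1
      hence "E \<in> null_sets Q" using assms(5) q_def by (simp add: null_sets_def Q.emeasure_eq_measure)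
      hence "E \<in> null_sets P" using ac by (auto simp: absolutely_continuous_def)
      hence "p = 0" unfolding p_def by (simp add: null_sets_def P.emeasure_eq_measure)
      with 1 show ?thesis by simp
    next
      case 2
      hence "Ec \<in> null_sets Q" using Ec qc by (simp add: null_sets_def Q.emeasure_eq_measure)
      hence "Ec \<in> null_sets P" using ac by (auto simp: absolutely_continuous_def)
      hence "p = 1" using pc by (simp add: null_sets_def P.emeasure_eq_measure)
      with 2 show ?thesis by simp
    next
      case 3
      define c1 where "c1 = p/q"
      define c2 where "c2 = (1-p)/(1-q)"
      have c: "c1 \<ge> 0" "c2 \<ge> 0" using 3 p01 by (auto simp: c1_def c2_def)
      have e1: "4*((2*c1+1)*q - p)/(c1+1)^2 = 4*q^2/(p+q)"
      proof -
        have u: "c1+1 = (p+q)/q" "(2*c1+1)*q - p = p+q" using 3 by (auto simp: c1_def field_simps)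
        have "p+q > 0" using 3 p01 by auto
        thus ?thesis unfolding u using 3 by (intro aux_div) auto
      qed
      have e2: "4*((2*c2+1)*(1-q) - (1-p))/(c2+1)^2 = 4*(1-q)^2/(2-p-q)"
      proof -
        have u: "c2+1 = (2-p-q)/(1-q)" "(2*c2+1)*(1-q) - (1-p) = 2-p-q" using 3 by (auto simp: c2_def field_simps)
        have "2-p-q > 0" using 3 p01 by auto
        thus ?thesis unfolding u using 3 by (intro aux_div) auto
      qed
      show ?thesis using binary_step[of q p V] 3 p01 gen[OF c] e1 e2 by simp
    qed
  qed
  show ?thesis using final_alg[OF V0 p01 bin] unfolding p_def q_def V_def .
qed

end
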